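(* Let $\eta=(\eta_{\alpha\beta})_{\alpha,\beta=1}^n$ be a constant symmetric invertible matrix with inverse $(\eta^{\alpha\beta})$, and let $F(t^1,\dots,t^n)$ satisfy the associativity equations $$\frac{\partial^3 F}{\partial t^\alpha\partial t^\beta\partial t^\lambda}\eta^{\lambda\mu}\frac{\partial^3 F}{\partial t^\gamma\partial t^\delta\partial t^\mu}=\frac{\partial^3 F}{\partial t^\gamma\partial t^\beta\partial t^\lambda}\eta^{\lambda\mu}\frac{\partial^3 F}{\partial t^\alpha\partial t^\delta\partial t^\mu}\quad\text{for all }\alpha,\beta,\gamma,\delta.$$ Define $$\widetilde F(t^0,t^1,\dots,t^n,t^{n+1})=\frac12\left(\eta_{\alpha\beta}t^\alpha t^\beta t^0+(t^0)^2t^{n+1}\right)+F(t^1,\dots,t^n)$$ and the $(n+2)\times(n+2)$ matrix (indices $0,1,\dots,n,n+1$) $$\widetilde\eta=\begin{pmatrix}0&0&1\\0&\eta&0\\1&0&0\end{pmatrix}.$$ Then $\widetilde F$ satisfies the associativity equations in the variables $t^0,\dots,t^{n+1}$ with $\eta$ replaced by $\widetilde\eta$ (and $\eta^{\lambda\mu}$ by the entries $\widetilde\eta^{kl}$ of $\widetilde\eta^{-1}$); the algebra with basis $e_0,\dots,e_{n+1}$ and multiplication $e_i\cdot e_j=c^k_{ij}e_k$, $c^k_{ij}=\widetilde\eta^{kl}\frac{\partial^3\widetilde F}{\partial t^l\partial t^i\partial t^j}$, is associative, has unity $e_0$ (i.e. $e_0\cdot e_k=e_k$ for all $k=0,\dots,n+1$),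 and $e_{n+1}^2=0$. Moreover, if $F$ is quasihomogeneous, i.e. $F(\lambda^{d_1}t^1,\dots,\lambda^{d_n}t^n)=\lambda^{d_F}F(t^1,\dots,t^n)$, and there is a constant $c$ with $d_\alpha+d_\beta=c$ for all $\alpha,\beta$ such that $\eta_{\alpha\beta}\neq0$, then $\widetilde F$ is quasihomogeneous with the same $d_F$, the same $d_1,\dots,d_n$, and $d_0=d_F-c$, $d_{n+1}=2c-d_F$.
   Context: Summation over repeated indices is understood. Quasihomogeneity of a function $G(t^0,\dots,t^{n+1})$ with exponents $d_0,\dots,d_{n+1}$ and degree $d_G$ means $G(\lambda^{d_0}t^0,\dots,\lambda^{d_{n+1}}t^{n+1})=\lambda^{d_G}G(t^0,\dots,t^{n+1})$. *)

theory Defs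
  imports "HOL-Analysis.Analysis"
begin

text \<open>Points are functions t :: nat \<Rightarrow> real; t i is the coordinate t^i.
  Matrices are functions nat \<Rightarrow> nat \<Rightarrow> real, only their entries on the
  relevant index set matter.\<close>

definition pd :: "nat \<Rightarrow> ((nat \<Rightarrow> real) \<Rightarrow> real) \<Rightarrow> (nat \<Rightarrow> real) \<Rightarrow> real" where
  "pd i G = (\<lambda>t. deriv (\<lambda>s. G (t(i := s))) (t i))"

fun iter_pd :: "nat list \<Rightarrow> ((nat \<Rightarrow> real) \<Rightarrow> real) \<Rightarrow> (nat \<Rightarrow> real) \<Rightarrow> real" where
  "iter_pd [] G = G"
| "iter_pd (i # is) G = pd i (iter_pd is G)"

definition coord_Ck :: "nat \<Rightarrow> nat set \<Rightarrow> ((nat \<Rightarrow> real) \<Rightarrow> real) \<Rightarrow> bool" where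
  "coord_Ck k I G \<longleftrightarrow>
     (\<forall>is. set is \<subseteq> I \<and> length is \<le> k \<longrightarrow>
        continuous_on UNIV (iter_pd is G) \<and>
        (length is < k \<longrightarrow>
           (\<forall>i\<in>I. \<forall>t. (\<lambda>s. iter_pd is G (t(i := s))) differentiable (at (t i)))))"

definition depends_only :: "nat set \<Rightarrow> ((nat \<Rightarrow> real) \<Rightarrow> real) \<Rightarrow> bool" where
  "depends_only I G \<longleftrightarrow> (\<forall>t t'. (\<forall>i\<in>I. t i = t' i) \<longrightarrow> G t = G t')"

definition assoc_eqs :: "nat set \<Rightarrow> (nat \<Rightarrow> nat \<Rightarrow> real) \<Rightarrow> ((nat \<Rightarrow> real) \<Rightarrow> real) \<Rightarrow> bool" where
  "assoc_eqs I g G \<longleftrightarrow>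
     (\<forall>t. \<forall>a\<in>I. \<forall>b\<in>I. \<forall>c\<in>I. \<forall>d\<in>I.
        (\<Sum>l\<in>I. \<Sum>m\<in>I. iter_pd [a, b, l] G t * g l m * iter_pd [c, d, m] G t)
      = (\<Sum>l\<in>I. \<Sum>m\<in>I. iter_pd [c, b, l] G t * g l m * iter_pd [a, d, m] G t))"

definition struct_const :: "nat set \<Rightarrow> (nat \<Rightarrow> nat \<Rightarrow> real) \<Rightarrow> ((nat \<Rightarrow> real) \<Rightarrow> real)
     \<Rightarrow> (nat \<Rightarrow> real) \<Rightarrow> nat \<Rightarrow> nat \<Rightarrow> nat \<Rightarrow> real" where
  "struct_const I g G t k i j = (\<Sum>l\<in>I. g k l * iter_pd [l, i, j] G t)"

definition quasihom :: "nat set \<Rightarrow> (nat \<Rightarrow> real) \<Rightarrow> real \<Rightarrow> ((nat \<Rightarrow> real) \<Rightarrow> real) \<Rightarrow> bool" where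
  "quasihom I d dG G \<longleftrightarrow>
     (\<forall>lam>0. \<forall>t. G (\<lambda>i. if i \<in> I then lam powr d i * t i else t i) = lam powr dG * G t)"

definition Ftilde :: "nat \<Rightarrow> (nat \<Rightarrow> nat \<Rightarrow> real) \<Rightarrow> ((nat \<Rightarrow> real) \<Rightarrow> real) \<Rightarrow> (nat \<Rightarrow> real) \<Rightarrow> real" where
  "Ftilde n eta F t =
     1/2 * ((\<Sum>a\<in>{1..n}. \<Sum>b\<in>{1..n}. eta a b * t a * t b) * t 0 + (t 0)^2 * t (n+1)) + F t"

definition eta_tilde :: "nat \<Rightarrow> (nat \<Rightarrow> nat \<Rightarrow> real) \<Rightarrow> nat \<Rightarrow> nat \<Rightarrow> real" where
  "eta_tilde n eta k l =
     (if k = 0 then (if l = n+1 then 1 else 0)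
      else if k = n+1 then (if l = 0 then 1 else 0)
      else if l = 0 \<or> l = n+1 then 0 else eta k l)"

end

theory Submission
  imports Defs "Jordan_Normal_Form.Determinant"
begin


lemma inv_swap:
  fixes A B :: "nat \<Rightarrow> nat \<Rightarrow> real"
  assumes "\<forall>k\<in>{0..<d}. \<forall>m\<in>{0..<d}. (\<Sum>l\<in>{0..<d}. A k l * B l m) = (if k = m then 1 else 0)"
  shows "\<forall>k\<in>{0..<d}. \<forall>m\<in>{0..<d}. (\<Sum>l\<in>{0..<d}. B k l * A l m) = (if k = m then 1 else 0)"
proof -
  define A' where "A' = mat d d (\<lambda>(i,j). A i j)"
  define B' where "B' = mat d d (\<lambda>(i,j). B i j)"
  have cA: "A' \<in> carrier_mat d d" and cB: "B' \<in> carrier_mat d d" unfolding A'_def B'_def by auto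
  have "A' * B' = 1\<^sub>m d"
  proof (rule eq_matI)
    fix i j assume "i < dim_row (1\<^sub>m d)" "j < dim_col (1\<^sub>m d)"
    then have i: "i < d" and j: "j < d" by auto
    have "(A' * B') $$ (i,j) = (\<Sum>l\<in>{0..<d}. A i l * B l j)"
      using i j unfolding A'_def B'_def by (simp add: scalar_prod_def)
    also have "\<dots> = 1\<^sub>m d $$ (i,j)" using assms i j by simp
    finally show "(A' * B') $$ (i,j) = 1\<^sub>m d $$ (i,j)" .
  qed (auto simp: A'_def B'_def)
  from mat_mult_left_right_inverse[OF cA cB this] have BA: "B' * A' = 1\<^sub>m d" .
  show ?thesis
  proof (intro ballI)
    fix k m assume k: "k \<in> {0..<d}" and m: "m \<in> {0..<d}"
    have "(\<Sum>l\<in>{0..<d}. B k l * A l m) = (B' * A') $$ (k,m)"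
      using k m unfolding A'_def B'_def by (simp add: scalar_prod_def)
    also have "\<dots> = (if k = m then 1 else 0)" using k m by (simp add: BA)
    finally show "(\<Sum>l\<in>{0..<d}. B k l * A l m) = (if k = m then 1 else 0)" .
  qed
qed


lemma pd_at:
  assumes "i \<noteq> j"
  shows "pd i G (t(i:=s, j:=v)) = deriv (\<lambda>s'. G (t(i:=s', j:=v))) s"
  using assms by (simp add: pd_def fun_upd_twist)

lemma pd_upd: "pd j H (t(j:=v)) = deriv (\<lambda>s. H (t(j:=s))) v"
  by (simp add: pd_def)

lemma mixed_mvt:
  assumes ij: "i \<noteq> j"
    and Gi: "\<forall>t. (\<lambda>s. G (t(i:=s))) differentiable (at (t i))"
    and Gij: "\<forall>t. (\<lambda>s. pd i G (t(j:=s))) differentiable (at (t j))"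
    and h: "h > 0"
  shows "\<exists>\<xi> \<eta>. t i < \<xi> \<and> \<xi> < t i + h \<and> t j < \<eta> \<and> \<eta> < t j + h \<and>
     G (t(i:=t i+h, j:=t j+h)) - G (t(i:=t i + h, j:= t j)) - G (t(i:=t i, j:=t j+h)) + G (t(i:=t i, j:=t j))
     = h*h* pd j (pd i G) (t(i:=\<xi>, j:=\<eta>))"
proof -
  define x where "x = t i"
  define y where "y = t j"
  have D1: "((\<lambda>s. G (t(i:=s, j:=v))) has_real_derivative pd i G (t(i:=s,j:=v))) (at s)" for s v
  proof -
    have "(\<lambda>s'. G ((t(i:=s,j:=v))(i:=s'))) differentiable (at ((t(i:=s,j:=v)) i))"
      using Gi by blast
    then have "(\<lambda>s'. G (t(i:=s',j:=v))) differentiable (at s)"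
      using ij by (simp add: fun_upd_twist)
    then show ?thesis using ij
      by (simp add: pd_at DERIV_deriv_iff_real_differentiable[symmetric])
  qed
  obtain \<xi> where xi: "x < \<xi>" "\<xi> < x + h"
    "(G (t(i:=x+h, j:=y+h)) - G (t(i:=x+h, j:=y))) - (G (t(i:=x, j:=y+h)) - G (t(i:=x, j:=y)))
     = (x + h - x) * (pd i G (t(i:=\<xi>,j:=y+h)) - pd i G (t(i:=\<xi>,j:=y)))"
  proof -
    have "\<And>s. ((\<lambda>s. G (t(i:=s, j:=y+h)) - G (t(i:=s, j:=y))) has_real_derivative
        (pd i G (t(i:=s,j:=y+h)) - pd i G (t(i:=s,j:=y)))) (at s)"
      by (intro derivative_intros D1)
    then show ?thesis
      using MVT2[of x "x+h" "\<lambda>s. G (t(i:=s, j:=y+h)) - G (t(i:=s, j:=y))"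
        "\<lambda>s. pd i G (t(i:=s,j:=y+h)) - pd i G (t(i:=s,j:=y))"] h that by auto
  qed
  have D2: "((\<lambda>u. pd i G (t(i:=\<xi>, j:=u))) has_real_derivative pd j (pd i G) (t(i:=\<xi>,j:=u))) (at u)" for u
  proof -
    have "(\<lambda>s. pd i G ((t(i:=\<xi>,j:=u))(j:=s))) differentiable (at ((t(i:=\<xi>,j:=u)) j))"
      using Gij by blast
    then have "(\<lambda>s. pd i G (t(i:=\<xi>,j:=s))) differentiable (at u)"
      by simp
    then show ?thesis
      using DERIV_deriv_iff_real_differentiable[of "\<lambda>s. pd i G (t(i:=\<xi>,j:=s))" u]
      by (simp only: pd_upd)
  qed
  obtain \<eta> where eta: "y < \<eta>" "\<eta> < y + h"
    "pd i G (t(i:=\<xi>,j:=y+h)) - pd i G (t(i:=\<xi>,j:=y)) = (y + h - y) * pd j (pd i G) (t(i:=\<xi>,j:=\<eta>))"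
    using MVT2[of y "y+h" "\<lambda>u. pd i G (t(i:=\<xi>, j:=u))" "\<lambda>u. pd j (pd i G) (t(i:=\<xi>,j:=u))"] h D2
    by auto
  show ?thesis
    apply (rule exI[of _ \<xi>], rule exI[of _ \<eta>])
    using xi eta unfolding x_def y_def by (auto simp: algebra_simps)
qed

lemma squeeze_seq:
  fixes a :: "nat \<Rightarrow> real"
  assumes "\<forall>m. x < a m \<and> a m < x + 1/real (Suc m)"
  shows "a \<longlonglongrightarrow> x"
proof (rule tendsto_sandwich[of "\<lambda>_. x" a sequentially "\<lambda>m. x + 1/real (Suc m)"])
  show "\<forall>\<^sub>F n in sequentially. x \<le> a n" using assms by (intro always_eventually) (auto intro: less_imp_le)
  show "\<forall>\<^sub>F n in sequentially. a n \<le> x + 1/real (Suc n)" using assms by (intro always_eventually) (auto intro: less_imp_le)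
  show "(\<lambda>_. x) \<longlonglongrightarrow> x" by simp
  have "(\<lambda>m. x + inverse (real (Suc m))) \<longlonglongrightarrow> x + 0"
    by (intro tendsto_add tendsto_const LIMSEQ_inverse_real_of_nat)
  then show "(\<lambda>m. x + 1/real (Suc m)) \<longlonglongrightarrow> x" by (simp add: inverse_eq_divide)
qed

lemma upd2_tendsto:
  fixes H :: "(nat \<Rightarrow> real) \<Rightarrow> real"
  assumes cont: "continuous_on UNIV H" and a: "a \<longlonglongrightarrow> x" and b: "b \<longlonglongrightarrow> y"
  shows "(\<lambda>m. H (t(i:=a m, j:=b m))) \<longlonglongrightarrow> H (t(i:=x, j:=y))"
proof -
  have c1: "continuous_on UNIV (\<lambda>z::real\<times>real. t(i:=fst z, j:=snd z))"
  proof (intro continuous_on_coordinatewise_then_product)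
    fix k
    show "continuous_on UNIV (\<lambda>z::real\<times>real. (t(i:=fst z, j:=snd z)) k)"
      by (cases "k = j"; cases "k = i") (auto intro: continuous_intros)
  qed
  have "continuous_on UNIV (\<lambda>z::real\<times>real. H (t(i:=fst z, j:=snd z)))"
    by (rule continuous_on_compose2[OF cont c1]) auto
  then have "isCont (\<lambda>z::real\<times>real. H (t(i:=fst z, j:=snd z))) (x, y)"
    by (simp add: continuous_on_eq_continuous_at)
  from isCont_tendsto_compose[OF this tendsto_Pair[OF a b]]
  show ?thesis by simp
qed

lemma schwarz:
  assumes ij: "i \<noteq> j"
    and Gi: "\<forall>t. (\<lambda>s. G (t(i:=s))) differentiable (at (t i))"
    and Gj: "\<forall>t. (\<lambda>s. G (t(j:=s))) differentiable (at (t j))"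
    and Gij: "\<forall>t. (\<lambda>s. pd i G (t(j:=s))) differentiable (at (t j))"
    and Gji: "\<forall>t. (\<lambda>s. pd j G (t(i:=s))) differentiable (at (t i))"
    and cA: "continuous_on UNIV (pd j (pd i G))"
    and cB: "continuous_on UNIV (pd i (pd j G))"
  shows "pd j (pd i G) t = pd i (pd j G) t"
proof -
  define x where "x = t i"
  define y where "y = t j"
  define h where "h m = 1 / real (Suc m)" for m
  have hpos: "h m > 0" for m by (simp add: h_def)
  have "\<forall>m. \<exists>\<xi> \<eta>. t i < \<xi> \<and> \<xi> < t i + h m \<and> t j < \<eta> \<and> \<eta> < t j + h m \<and>
     G (t(i:=t i+h m, j:=t j+h m)) - G (t(i:=t i + h m, j:= t j)) - G (t(i:=t i, j:=t j+h m)) + G (t(i:=t i, j:=t j))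
     = h m*h m* pd j (pd i G) (t(i:=\<xi>, j:=\<eta>))"
    using mixed_mvt[OF ij Gi Gij hpos] by blast
  then obtain \<xi> \<eta> where P: "\<forall>m. t i < \<xi> m \<and> \<xi> m < t i + h m \<and> t j < \<eta> m \<and> \<eta> m < t j + h m \<and>
     G (t(i:=t i+h m, j:=t j+h m)) - G (t(i:=t i + h m, j:= t j)) - G (t(i:=t i, j:=t j+h m)) + G (t(i:=t i, j:=t j))
     = h m*h m* pd j (pd i G) (t(i:=\<xi> m, j:=\<eta> m))"
    by metis
  have "\<forall>m. \<exists>\<xi> \<eta>. t j < \<xi> \<and> \<xi> < t j + h m \<and> t i < \<eta> \<and> \<eta> < t i + h m \<and>
     G (t(j:=t j+h m, i:=t i+h m)) - G (t(j:=t j + h m, i:= t i)) - G (t(j:=t j, i:=t i+h m)) + G (t(j:=t j, i:=t i))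
     = h m*h m* pd i (pd j G) (t(j:=\<xi>, i:=\<eta>))"
    using mixed_mvt[OF ij[symmetric] Gj Gji hpos] by blast
  then obtain \<xi>' \<eta>' where Q: "\<forall>m. t j < \<xi>' m \<and> \<xi>' m < t j + h m \<and> t i < \<eta>' m \<and> \<eta>' m < t i + h m \<and>
     G (t(j:=t j+h m, i:=t i+h m)) - G (t(j:=t j + h m, i:= t i)) - G (t(j:=t j, i:=t i+h m)) + G (t(j:=t j, i:=t i))
     = h m*h m* pd i (pd j G) (t(j:=\<xi>' m, i:=\<eta>' m))"
    by metis
  have eq: "pd j (pd i G) (t(i:=\<xi> m, j:=\<eta> m)) = pd i (pd j G) (t(j:=\<xi>' m, i:=\<eta>' m))" for m
  proof -
    have "h m*h m* pd j (pd i G) (t(i:=\<xi> m, j:=\<eta> m)) = h m*h m* pd i (pd j G) (t(j:=\<xi>' m, i:=\<eta>' m))"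
      using P Q ij by (simp add: fun_upd_twist algebra_simps)
    then show ?thesis using hpos[of m] by simp
  qed
  have L1: "(\<lambda>m. pd j (pd i G) (t(i:=\<xi> m, j:=\<eta> m))) \<longlonglongrightarrow> pd j (pd i G) (t(i:=t i, j:=t j))"
    by (intro upd2_tendsto cA squeeze_seq) (use P in \<open>auto simp: h_def\<close>)
  have L2: "(\<lambda>m. pd i (pd j G) (t(j:=\<xi>' m, i:=\<eta>' m))) \<longlonglongrightarrow> pd i (pd j G) (t(j:=t j, i:=t i))"
    by (intro upd2_tendsto cB squeeze_seq) (use Q in \<open>auto simp: h_def\<close>)
  from L1 L2 show ?thesis unfolding eq by (auto intro: LIMSEQ_unique)
qed


lemma pd_const: "pd i (\<lambda>_. c) = (\<lambda>_. 0)"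
  by (simp add: pd_def fun_eq_iff)

lemma depends_pd_out:
  assumes "depends_only I G" "i \<notin> I"
  shows "pd i G = (\<lambda>_. 0)"
proof -
  have "G (t(i:=s)) = G t" for t s using assms unfolding depends_only_def by auto
  then show ?thesis by (simp add: pd_def fun_eq_iff)
qed

lemma depends_pd:
  assumes "depends_only I G"
  shows "depends_only I (pd i G)"
proof (cases "i \<in> I")
  case True
  show ?thesis unfolding depends_only_def
  proof (intro allI impI)
    fix t t' :: "nat \<Rightarrow> real" assume tt: "\<forall>k\<in>I. t k = t' k"
    have "(\<lambda>s. G (t(i:=s))) = (\<lambda>s. G (t'(i:=s)))"
      using assms tt unfolding depends_only_def by (auto simp: fun_eq_iff)
    moreover have "t i = t' i" using tt True by auto
    ultimately show "pd i G t = pd i G t'" by (simp add: pd_def)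
  qed
next
  case False
  then show ?thesis using depends_pd_out[OF assms False] by (simp add: depends_only_def)
qed

lemma depends_iter: "depends_only I G \<Longrightarrow> depends_only I (iter_pd is G)"
  by (induction "is") (auto intro: depends_pd)

lemma iter_out:
  assumes "depends_only I G" "\<not> set is \<subseteq> I"
  shows "iter_pd is G = (\<lambda>_. 0)"
  using assms(2)
proof (induction "is")
  case Nil then show ?case by simp
next
  case (Cons a js)
  show ?case
  proof (cases "a \<in> I")
    case True
    then have "iter_pd js G = (\<lambda>_. 0)" using Cons by auto
    then show ?thesis by (simp add: pd_const)
  next
    case False
    then show ?thesis using depends_pd_out[OF depends_iter[OF assms(1)] False] by simp
  qed
qed

lemma pd_add:
  assumes "\<forall>t. (\<lambda>s. G (t(i:=s))) differentiable (at (t i))"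
    and "\<forall>t. (\<lambda>s. H (t(i:=s))) differentiable (at (t i))"
  shows "pd i (\<lambda>t. G t + H t) = (\<lambda>t. pd i G t + pd i H t)"
proof
  fix t
  have "DERIV (\<lambda>s. G (t(i:=s))) (t i) :> deriv (\<lambda>s. G (t(i:=s))) (t i)"
       "DERIV (\<lambda>s. H (t(i:=s))) (t i) :> deriv (\<lambda>s. H (t(i:=s))) (t i)"
    using assms by (auto simp: DERIV_deriv_iff_real_differentiable)
  from DERIV_add[OF this] show "pd i (\<lambda>t. G t + H t) t = pd i G t + pd i H t"
    unfolding pd_def by (rule DERIV_imp_deriv)
qed

definition diffall :: "((nat \<Rightarrow> real) \<Rightarrow> real) \<Rightarrow> bool" where
  "diffall G \<longleftrightarrow> (\<forall>js i t. length js < 3 \<longrightarrow> (\<lambda>s. iter_pd js G (t(i:=s))) differentiable (at (t i)))"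

lemma iter_add:
  assumes "diffall G" "diffall H" "length is \<le> 3"
  shows "iter_pd is (\<lambda>t. G t + H t) = (\<lambda>t. iter_pd is G t + iter_pd is H t)"
  using assms(3)
proof (induction "is")
  case Nil then show ?case by simp
next
  case (Cons a js)
  then have "iter_pd js (\<lambda>t. G t + H t) = (\<lambda>t. iter_pd js G t + iter_pd js H t)" by simp
  moreover have "length js < 3" using Cons by simp
  ultimately show ?case using assms(1,2) unfolding diffall_def
    by (simp add: pd_add)
qed

lemma diffall_F:
  assumes dep: "depends_only I F" and ck: "coord_Ck 3 I F"
  shows "diffall F"
  unfolding diffall_def
proof (intro allI impI)
  fix js i t assume len: "length (js::nat list) < 3"
  show "(\<lambda>s. iter_pd js F (t(i:=s))) differentiable (at (t i))"
  proof (cases "set js \<subseteq> I")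
    case True
    show ?thesis
    proof (cases "i \<in> I")
      case True
      then show ?thesis using ck \<open>set js \<subseteq> I\<close> len unfolding coord_Ck_def by auto
    next
      case False
      have "iter_pd js F (t(i:=s)) = iter_pd js F t" for s
        using depends_iter[OF dep, of js] False unfolding depends_only_def by auto
      then show ?thesis by simp
    qed
  next
    case False
    then show ?thesis using iter_out[OF dep False] by simp
  qed
qed


definition has_pd :: "nat \<Rightarrow> ((nat \<Rightarrow> real) \<Rightarrow> real) \<Rightarrow> ((nat \<Rightarrow> real) \<Rightarrow> real) \<Rightarrow> bool" where
  "has_pd i G G' \<longleftrightarrow> (\<forall>t. ((\<lambda>s. G (t(i:=s))) has_real_derivative G' t) (at (t i)))"

lemma hp_pd: "has_pd i G G' \<Longrightarrow> pd i G = G'"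
  unfolding has_pd_def pd_def by (auto simp: fun_eq_iff intro: DERIV_imp_deriv)

lemma hp_diff: "has_pd i G G' \<Longrightarrow> \<forall>t. (\<lambda>s. G (t(i:=s))) differentiable (at (t i))"
  unfolding has_pd_def using real_differentiable_def by blast

lemma hp_cong: "has_pd i G D \<Longrightarrow> (\<And>t. D t = D' t) \<Longrightarrow> has_pd i G D'"
  unfolding has_pd_def by (metis)

lemma hp_const: "has_pd i (\<lambda>t. c) (\<lambda>t. 0)"
  unfolding has_pd_def by auto

lemma hp_var: "has_pd i (\<lambda>t. t k) (\<lambda>t. if k = i then 1 else 0)"
  unfolding has_pd_def by (auto intro!: derivative_eq_intros)

lemma hp_add: "has_pd i G G' \<Longrightarrow> has_pd i H H' \<Longrightarrow> has_pd i (\<lambda>t. G t + H t) (\<lambda>t. G' t + H' t)"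
  unfolding has_pd_def by (auto intro!: derivative_eq_intros)

lemma hp_mult: "has_pd i G G' \<Longrightarrow> has_pd i H H' \<Longrightarrow> has_pd i (\<lambda>t. G t * H t) (\<lambda>t. G' t * H t + G t * H' t)"
  unfolding has_pd_def
proof (intro allI)
  fix t
  assume "\<forall>t. ((\<lambda>s. G (t(i := s))) has_real_derivative G' t) (at (t i))"
     "\<forall>t. ((\<lambda>s. H (t(i := s))) has_real_derivative H' t) (at (t i))"
  from DERIV_mult[OF this[rule_format, of t]]
  show "((\<lambda>s. G (t(i := s)) * H (t(i := s))) has_real_derivative G' t * H t + G t * H' t) (at (t i))"
    by (simp add: algebra_simps)
qed

lemma hp_sum: "finite A \<Longrightarrow> (\<And>a. a \<in> A \<Longrightarrow> has_pd i (G a) (G' a)) \<Longrightarrow>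
   has_pd i (\<lambda>t. \<Sum>a\<in>A. G a t) (\<lambda>t. \<Sum>a\<in>A. G' a t)"
  unfolding has_pd_def by (auto intro!: DERIV_sum)

lemma hp_pow2: "has_pd i G G' \<Longrightarrow> has_pd i (\<lambda>t. (G t)^2) (\<lambda>t. 2 * G t * G' t)"
  unfolding has_pd_def
proof (intro allI)
  fix t
  assume "\<forall>t. ((\<lambda>s. G (t(i := s))) has_real_derivative G' t) (at (t i))"
  from DERIV_mult[OF this[rule_format, of t] this[rule_format, of t]]
  show "((\<lambda>s. (G (t(i := s)))^2) has_real_derivative 2 * G t * G' t) (at (t i))"
    by (simp add: algebra_simps power2_eq_square)
qed

lemmas hp_rules = hp_add hp_mult hp_sum hp_pow2 hp_var hp_const

definition Qf :: "nat \<Rightarrow> (nat \<Rightarrow> nat \<Rightarrow> real) \<Rightarrow> (nat \<Rightarrow> real) \<Rightarrow> real" where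
  "Qf n eta t = 1/2 * ((\<Sum>a\<in>{1..n}. \<Sum>b\<in>{1..n}. eta a b * t a * t b) * t 0 + (t 0)^2 * t (n+1))"

lemma Ftilde_split: "Ftilde n eta F = (\<lambda>t. Qf n eta t + F t)"
  by (simp add: fun_eq_iff Ftilde_def Qf_def)

definition Lf :: "nat \<Rightarrow> (nat \<Rightarrow> nat \<Rightarrow> real) \<Rightarrow> nat \<Rightarrow> (nat \<Rightarrow> real) \<Rightarrow> real" where
  "Lf n eta c t = (\<Sum>b\<in>{1..n}. eta c b * t b)"

definition Q1 :: "nat \<Rightarrow> (nat \<Rightarrow> nat \<Rightarrow> real) \<Rightarrow> nat \<Rightarrow> (nat \<Rightarrow> real) \<Rightarrow> real" where
  "Q1 n eta i t = (if i = 0 then 1/2 * (\<Sum>a\<in>{1..n}. \<Sum>b\<in>{1..n}. eta a b * t a * t b) + t 0 * t (n+1) else 0)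
     + (if i = n+1 then 1/2 * (t 0)^2 else 0) + (if i \<in> {1..n} then t 0 * Lf n eta i t else 0)"

definition Q2 :: "nat \<Rightarrow> (nat \<Rightarrow> nat \<Rightarrow> real) \<Rightarrow> nat \<Rightarrow> nat \<Rightarrow> (nat \<Rightarrow> real) \<Rightarrow> real" where
  "Q2 n eta b c t = (if c = 0 \<and> b = 0 then t (n+1) else 0) + (if c = 0 \<and> b = n+1 then t 0 else 0)
     + (if c = 0 \<and> b \<in> {1..n} then Lf n eta b t else 0) + (if c = n+1 \<and> b = 0 then t 0 else 0)
     + (if c \<in> {1..n} \<and> b = 0 then Lf n eta c t else 0) + (if c \<in> {1..n} \<and> b \<in> {1..n} then t 0 * eta c b else 0)"

definition Q3 :: "nat \<Rightarrow> (nat \<Rightarrow> nat \<Rightarrow> real) \<Rightarrow> nat \<Rightarrow> nat \<Rightarrow> nat \<Rightarrow> real" where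
  "Q3 n eta a b c = (if c = 0 \<and> b = 0 \<and> a = n+1 then 1 else 0) + (if c = 0 \<and> b = n+1 \<and> a = 0 then 1 else 0)
     + (if c = 0 \<and> b \<in> {1..n} \<and> a \<in> {1..n} then eta b a else 0) + (if c = n+1 \<and> b = 0 \<and> a = 0 then 1 else 0)
     + (if c \<in> {1..n} \<and> b = 0 \<and> a \<in> {1..n} then eta c a else 0) + (if c \<in> {1..n} \<and> b \<in> {1..n} \<and> a = 0 then eta c b else 0)"

lemma ifd1: "x * (if P then 1 else 0) = (if P then x else (0::real))" by simp
lemma ifd2: "(if P then 1 else 0) * x = (if P then x else (0::real))" by simp

lemma ifd3: "(if P then x else 0) * y = (if P then x * y else (0::real))" by simp

lemma hp_L: "has_pd i (Lf n eta c) (\<lambda>t. if i \<in> {1..n} then eta c i else 0)"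
  unfolding Lf_def
  apply (rule hp_cong)
   apply (rule hp_rules | simp)+
  apply (simp add: ifd1 ifd2 sum.delta sum.delta')
  done

lemma sum_if_out: "(\<Sum>b\<in>B. if P then f b else (0::real)) = (if P then (\<Sum>b\<in>B. f b) else 0)"
  by simp

lemma S_deriv:
  fixes eta :: "nat \<Rightarrow> nat \<Rightarrow> real" and t :: "nat \<Rightarrow> real"
  assumes sym: "\<forall>a\<in>{1..n}. \<forall>b\<in>{1..n}. eta a b = eta b a" and i: "i \<in> {1..n}"
  shows "(\<Sum>a = Suc 0..n. \<Sum>b = Suc 0..n.
                (if a = i then eta a b else 0) * t b + (if b = i then eta a b * t a else 0))
      = (\<Sum>b = Suc 0..n. eta i b * t b) * 2"
proof -
  have "(\<Sum>a = Suc 0..n. \<Sum>b = Suc 0..n. (if a = i then eta a b else 0) * t b)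
      = (\<Sum>b = Suc 0..n. eta i b * t b)"
    proof -
    have "\<And>a. (\<Sum>b = Suc 0..n. (if a = i then eta a b else 0) * t b) = (if a = i then (\<Sum>b = Suc 0..n. eta i b * t b) else 0)"
      by auto
    then show ?thesis using i by (simp add: sum.delta)
  qed
  moreover have "(\<Sum>a = Suc 0..n. \<Sum>b = Suc 0..n. (if b = i then eta a b * t a else 0))
      = (\<Sum>b = Suc 0..n. eta i b * t b)"
    using i sym by (auto simp: sum.delta' intro!: sum.cong)
  ultimately show ?thesis by (simp add: sum.distrib)
qed

lemma hp_Q:
  assumes sym: "\<forall>a\<in>{1..n}. \<forall>b\<in>{1..n}. eta a b = eta b a"
  shows "has_pd i (Qf n eta) (Q1 n eta i)"
  unfolding Qf_def[abs_def]
  apply (rule hp_cong)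
   apply (rule hp_rules | simp)+
  apply (simp add: ifd1 ifd2 sum.delta sum.delta' sum_if_out Q1_def Lf_def)
  using S_deriv[OF sym, of i] apply (auto simp: algebra_simps)
  done

lemma hp_if: "has_pd i G G' \<Longrightarrow> has_pd i H H' \<Longrightarrow>
  has_pd i (\<lambda>t. if P then G t else H t) (\<lambda>t. if P then G' t else H' t)"
  by (cases P) auto

lemma hp_Q1:
  assumes sym: "\<forall>a\<in>{1..n}. \<forall>b\<in>{1..n}. eta a b = eta b a"
  shows "has_pd i (Q1 n eta c) (Q2 n eta i c)"
  unfolding Q1_def[abs_def]
  apply (rule hp_cong)
   apply (rule hp_if hp_L hp_rules | simp)+
  apply (simp add: ifd1 ifd2 sum.delta sum.delta' sum_if_out Q2_def Lf_def)
  using S_deriv[OF sym, of i] apply (auto simp: algebra_simps)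
  done

lemma hp_Q2:
  shows "has_pd i (Q2 n eta b c) (\<lambda>_. Q3 n eta i b c)"
  unfolding Q2_def[abs_def]
  apply (rule hp_cong)
   apply (rule hp_if hp_L hp_rules | simp)+
  apply (auto simp: Q3_def)
  done


lemma iter_Q:
  assumes sym: "\<forall>a\<in>{1..n}. \<forall>b\<in>{1..n}. eta a b = eta b a"
  shows "iter_pd [c] (Qf n eta) = Q1 n eta c"
    "iter_pd [b,c] (Qf n eta) = Q2 n eta b c"
    "iter_pd [a,b,c] (Qf n eta) = (\<lambda>_. Q3 n eta a b c)"
  using hp_pd[OF hp_Q[OF sym]] hp_pd[OF hp_Q1[OF sym]] hp_pd[OF hp_Q2] by simp_all

lemma diffall_Q:
  assumes sym: "\<forall>a\<in>{1..n}. \<forall>b\<in>{1..n}. eta a b = eta b a"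
  shows "diffall (Qf n eta)"
  unfolding diffall_def
proof (intro allI impI)
  fix js i t assume len: "length (js::nat list) < 3"
  show "(\<lambda>s. iter_pd js (Qf n eta) (t(i:=s))) differentiable (at (t i))"
  proof (cases js)
    case Nil
    then show ?thesis using hp_diff[OF hp_Q[OF sym]] by simp
  next
    case (Cons c js')
    show ?thesis
    proof (cases js')
      case Nil
      then show ?thesis using Cons hp_diff[OF hp_Q1[OF sym]] iter_Q[OF sym] by simp
    next
      case (Cons b js'')
      with len \<open>js = c # js'\<close> have "js'' = []" by simp
      then show ?thesis using Cons \<open>js = c # js'\<close> hp_diff[OF hp_Q2] iter_Q[OF sym] by simp
    qed
  qed
qed

lemma T_formula:
  assumes sym: "\<forall>a\<in>{1..n}. \<forall>b\<in>{1..n}. eta a b = eta b a"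
    and dep: "depends_only {1..n} F" and ck: "coord_Ck 3 {1..n} F"
  shows "iter_pd [a,b,c] (Ftilde n eta F) t = Q3 n eta a b c + iter_pd [a,b,c] F t"
  unfolding Ftilde_split
  using iter_add[OF diffall_Q[OF sym] diffall_F[OF dep ck], of "[a,b,c]"] iter_Q[OF sym]
  by simp

lemma F_sym:
  assumes dep: "depends_only I F" and ck: "coord_Ck 3 I F"
  shows "iter_pd [a,b,c] F t = iter_pd [b,a,c] F t" "iter_pd [a,b,c] F t = iter_pd [a,c,b] F t"
proof -
  have zero: "iter_pd js F t = 0" if "\<not> set js \<subseteq> I" for js
    using iter_out[OF dep that] by simp
  have ckd: "\<And>js i t. set js \<subseteq> I \<Longrightarrow> length js < 3 \<Longrightarrow> i \<in> I \<Longrightarrow>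
      (\<lambda>s. iter_pd js F (t(i := s))) differentiable (at (t i))"
    and ckc: "\<And>js. set js \<subseteq> I \<Longrightarrow> length js \<le> 3 \<Longrightarrow> continuous_on UNIV (iter_pd js F)"
    using ck unfolding coord_Ck_def by auto
  show "iter_pd [a,b,c] F t = iter_pd [b,a,c] F t"
  proof (cases "a \<in> I \<and> b \<in> I \<and> c \<in> I \<and> a \<noteq> b")
    case True
    have "pd a (pd b (pd c F)) t = pd b (pd a (pd c F)) t"
      apply (rule schwarz)
      using True ckd[of "[c]"] ckd[of "[a,c]"] ckd[of "[b,c]"] ckc[of "[a,b,c]"] ckc[of "[b,a,c]"]
      by auto
    then show ?thesis by simp
  next
    case False
    then show ?thesis using zero[of "[a,b,c]"] zero[of "[b,a,c]"] by auto
  qed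
  show "iter_pd [a,b,c] F t = iter_pd [a,c,b] F t"
  proof (cases "b \<in> I \<and> c \<in> I \<and> b \<noteq> c")
    case True
    have "pd b (pd c F) = pd c (pd b F)"
    proof
      fix t
      show "pd b (pd c F) t = pd c (pd b F) t"
        apply (rule schwarz)
        using True ckd[of "[]"] ckd[of "[c]"] ckd[of "[b]"] ckc[of "[b,c]"] ckc[of "[c,b]"]
        by auto
    qed
    then show ?thesis by simp
  next
    case False
    then show ?thesis using zero[of "[a,b,c]"] zero[of "[a,c,b]"] by auto
  qed
qed


lemma sumJ: "sum f {0..(n::nat)+1} = f 0 + sum f {1..n} + (f (n+1) :: real)"
proof -
  have "{0..n+1} = insert 0 (insert (n+1) {1..n})" by auto
  then show ?thesis by (simp add: add_ac)
qed

lemma swap3: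
  fixes a :: "nat \<Rightarrow> real"
  assumes "finite A" "finite B"
  shows "(\<Sum>k\<in>A. a k * (\<Sum>l\<in>B. b k l * c l)) = (\<Sum>l\<in>B. (\<Sum>k\<in>A. a k * b k l) * c l)"
  by (simp add: sum_distrib_left sum_distrib_right mult.assoc sum.swap[of _ A B])

context
  fixes n :: nat and eta g M :: "nat \<Rightarrow> nat \<Rightarrow> real"
  assumes eta_sym: "\<forall>a\<in>{1..n}. \<forall>b\<in>{1..n}. eta a b = eta b a"
    and eta_inv: "\<forall>a\<in>{1..n}. \<forall>b\<in>{1..n}. (\<Sum>l\<in>{1..n}. eta a l * g l b) = (if a = b then 1 else 0)"
    and EM: "\<forall>k\<in>{0..n+1}. \<forall>m\<in>{0..n+1}.
                (\<Sum>l\<in>{0..n+1}. eta_tilde n eta k l * M l m) = (if k = m then 1 else 0)"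
begin

lemma ME: "\<forall>k\<in>{0..n+1}. \<forall>m\<in>{0..n+1}.
                (\<Sum>l\<in>{0..n+1}. M k l * eta_tilde n eta l m) = (if k = m then 1 else 0)"
proof -
  have J: "{0..n+1} = {0..<n+2}" by auto
  show ?thesis using inv_swap[of "n+2" "eta_tilde n eta" M] EM unfolding J by blast
qed

lemma Esym: "x \<in> {0..n+1} \<Longrightarrow> y \<in> {0..n+1} \<Longrightarrow> eta_tilde n eta x y = eta_tilde n eta y x"
  using eta_sym by (auto simp: eta_tilde_def)

lemma M0: "m \<in> {0..n+1} \<Longrightarrow> M 0 m = (if m = n+1 then 1 else 0)"
proof -
  assume m: "m \<in> {0..n+1}"
  have "(\<Sum>l\<in>{0..n+1}. eta_tilde n eta (n+1) l * M l m) = M 0 m"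
    unfolding sumJ by (simp add: eta_tilde_def)
  then show ?thesis using EM m by force
qed

lemma MN: "m \<in> {0..n+1} \<Longrightarrow> M (n+1) m = (if m = 0 then 1 else 0)"
proof -
  assume m: "m \<in> {0..n+1}"
  have "(\<Sum>l\<in>{0..n+1}. eta_tilde n eta 0 l * M l m) = M (n+1) m"
    unfolding sumJ by (simp add: eta_tilde_def)
  then show ?thesis using EM m by force
qed

lemma Msym: "x \<in> {0..n+1} \<Longrightarrow> y \<in> {0..n+1} \<Longrightarrow> M x y = M y x"
proof -
  assume x: "x \<in> {0..n+1}" and y: "y \<in> {0..n+1}"
  let ?J = "{0..n+1}" and ?E = "eta_tilde n eta"
  have EMt: "(\<Sum>l\<in>?J. ?E k l * M y l) = (if k = y then 1 else 0)" if "k \<in> ?J" for k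
  proof -
    have "(\<Sum>l\<in>?J. ?E k l * M y l) = (\<Sum>l\<in>?J. M y l * ?E l k)"
      using that by (intro sum.cong) (auto simp: Esym mult.commute)
    then show ?thesis using ME that y by auto
  qed
  have "M x y = (\<Sum>k\<in>?J. M x k * (if k = y then 1 else 0))"
    using y by (simp add: ifd1 sum.delta')
  also have "\<dots> = (\<Sum>k\<in>?J. M x k * (\<Sum>l\<in>?J. ?E k l * M y l))"
    by (intro sum.cong refl) (simp only: EMt)
  also have "\<dots> = (\<Sum>l\<in>?J. (\<Sum>k\<in>?J. M x k * ?E k l) * M y l)"
    by (rule swap3) auto
  also have "\<dots> = (\<Sum>l\<in>?J. (if x = l then 1 else 0) * M y l)"
    using ME x by (intro sum.cong) auto
  also have "\<dots> = M y x" using x by (simp add: ifd2 sum.delta)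
  finally show ?thesis .
qed

lemma MI: "x \<in> {1..n} \<Longrightarrow> y \<in> {1..n} \<Longrightarrow> M x y = g x y"
proof -
  assume x: "x \<in> {1..n}" and y: "y \<in> {1..n}"
  let ?I = "{1..n}" and ?E = "eta_tilde n eta"
  have R: "(\<Sum>\<mu>\<in>?I. M x \<mu> * eta \<mu> k) = (if x = k then 1 else 0)" if k: "k \<in> ?I" for k
  proof -
    have "(\<Sum>l\<in>{0..n+1}. M x l * ?E l k) = (\<Sum>\<mu>\<in>?I. M x \<mu> * eta \<mu> k)"
      unfolding sumJ using k by (auto simp: eta_tilde_def intro!: sum.cong)
    then show ?thesis using ME x k by auto
  qed
  have "g x y = (\<Sum>k\<in>?I. (if x = k then 1 else 0) * g k y)"
    using x by (simp add: ifd2 sum.delta)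
  also have "\<dots> = (\<Sum>k\<in>?I. (\<Sum>\<mu>\<in>?I. M x \<mu> * eta \<mu> k) * g k y)"
    by (intro sum.cong refl) (simp only: R)
  also have "\<dots> = (\<Sum>\<mu>\<in>?I. M x \<mu> * (\<Sum>k\<in>?I. eta \<mu> k * g k y))"
    by (rule swap3[symmetric]) auto
  also have "\<dots> = (\<Sum>\<mu>\<in>?I. M x \<mu> * (if \<mu> = y then 1 else 0))"
    using eta_inv y by (intro sum.cong) auto
  also have "\<dots> = M x y" using y by (simp add: ifd1 sum.delta')
  finally show ?thesis by simp
qed

lemma W_split:
  "(\<Sum>l\<in>{0..n+1}. \<Sum>m\<in>{0..n+1}. X l * M l m * Y m)
   = X 0 * Y (n+1) + X (n+1) * Y 0 + (\<Sum>l\<in>{1..n}. \<Sum>m\<in>{1..n}. X l * g l m * Y m)"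
proof -
  have inner: "(\<Sum>m\<in>{0..n+1}. X l * M l m * Y m) = (\<Sum>m\<in>{1..n}. X l * g l m * Y m)"
    if l: "l \<in> {1..n}" for l
  proof -
    have "M l 0 = 0" "M l (n+1) = 0"
      using Msym[of l 0] Msym[of l "n+1"] M0[of l] MN[of l] l by auto
    then show ?thesis unfolding sumJ using l by (auto simp: MI intro!: sum.cong)
  qed
  have A: "(\<Sum>m\<in>{0..n+1}. X 0 * M 0 m * Y m) = X 0 * Y (n+1)"
  proof -
    have "(\<Sum>m\<in>{1..n}. X 0 * M 0 m * Y m) = 0"
      by (intro sum.neutral) (auto simp: M0)
    then show ?thesis unfolding sumJ by (simp add: M0)
  qed
  have B: "(\<Sum>m\<in>{0..n+1}. X (n+1) * M (n+1) m * Y m) = X (n+1) * Y 0"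
  proof -
    have "(\<Sum>m\<in>{1..n}. X (n+1) * M (n+1) m * Y m) = 0"
      by (intro sum.neutral) (auto simp: MN[simplified])
    then show ?thesis unfolding sumJ by (simp add: MN[simplified])
  qed
  have "(\<Sum>l\<in>{0..n+1}. \<Sum>m\<in>{0..n+1}. X l * M l m * Y m)
     = (\<Sum>m\<in>{0..n+1}. X 0 * M 0 m * Y m) + (\<Sum>l\<in>{1..n}. \<Sum>m\<in>{0..n+1}. X l * M l m * Y m)
       + (\<Sum>m\<in>{0..n+1}. X (n+1) * M (n+1) m * Y m)"
    by (rule sumJ)
  also have "(\<Sum>l\<in>{1..n}. \<Sum>m\<in>{0..n+1}. X l * M l m * Y m) = (\<Sum>l\<in>{1..n}. \<Sum>m\<in>{1..n}. X l * g l m * Y m)"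
    by (rule sum.cong[OF refl inner])
  finally show ?thesis unfolding A B by simp
qed

end


lemma sum_zero_ext: "(\<forall>l\<in>A. X l = (0::real)) \<or> (\<forall>m\<in>A. Y m = 0) \<Longrightarrow>
   (\<Sum>l\<in>A. \<Sum>m\<in>A. X l * M l m * Y m) = 0"
  by (erule disjE) (simp_all add: sum.neutral)

lemma prod_sums:
  fixes A :: "nat \<Rightarrow> nat \<Rightarrow> real"
  assumes "finite J"
  shows "(\<Sum>k\<in>J. (\<Sum>p\<in>J. A k p) * (\<Sum>q\<in>J. B k q)) = (\<Sum>q\<in>J. \<Sum>p\<in>J. \<Sum>k\<in>J. A k p * B k q)"
proof -
  have "(\<Sum>k\<in>J. (\<Sum>p\<in>J. A k p) * (\<Sum>q\<in>J. B k q)) = (\<Sum>k\<in>J. \<Sum>p\<in>J. \<Sum>q\<in>J. A k p * B k q)"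
    by (simp add: sum_product)
  also have "\<dots> = (\<Sum>p\<in>J. \<Sum>k\<in>J. \<Sum>q\<in>J. A k p * B k q)" by (rule sum.swap)
  also have "\<dots> = (\<Sum>p\<in>J. \<Sum>q\<in>J. \<Sum>k\<in>J. A k p * B k q)" by (intro sum.cong refl sum.swap)
  also have "\<dots> = (\<Sum>q\<in>J. \<Sum>p\<in>J. \<Sum>k\<in>J. A k p * B k q)" by (rule sum.swap)
  finally show ?thesis .
qed

context
  fixes n :: nat and eta g M :: "nat \<Rightarrow> nat \<Rightarrow> real" and T :: "nat \<Rightarrow> nat \<Rightarrow> nat \<Rightarrow> real"
  assumes eta_sym: "\<forall>a\<in>{1..n}. \<forall>b\<in>{1..n}. eta a b = eta b a"
    and eta_inv: "\<forall>a\<in>{1..n}. \<forall>b\<in>{1..n}. (\<Sum>l\<in>{1..n}. eta a l * g l b) = (if a = b then 1 else 0)"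
    and EM: "\<forall>k\<in>{0..n+1}. \<forall>m\<in>{0..n+1}.
                (\<Sum>l\<in>{0..n+1}. eta_tilde n eta k l * M l m) = (if k = m then 1 else 0)"
    and Ts1: "\<forall>a\<in>{0..n+1}. \<forall>b\<in>{0..n+1}. \<forall>c\<in>{0..n+1}. T a b c = T b a c"
    and Ts2: "\<forall>a\<in>{0..n+1}. \<forall>b\<in>{0..n+1}. \<forall>c\<in>{0..n+1}. T a b c = T a c b"
    and T0: "\<forall>x\<in>{0..n+1}. \<forall>y\<in>{0..n+1}. T 0 x y = eta_tilde n eta x y"
    and TN: "\<forall>x\<in>{0..n+1}. \<forall>y\<in>{0..n+1}. T (n+1) x y = (if x = 0 \<and> y = 0 then 1 else 0)"
    and FW: "\<forall>a\<in>{1..n}. \<forall>b\<in>{1..n}. \<forall>c\<in>{1..n}. \<forall>d\<in>{1..n}.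
        (\<Sum>l\<in>{1..n}. \<Sum>m\<in>{1..n}. T a b l * g l m * T c d m)
      = (\<Sum>l\<in>{1..n}. \<Sum>m\<in>{1..n}. T c b l * g l m * T a d m)"
begin

abbreviation "J \<equiv> {0..n+1}"
abbreviation "E \<equiv> eta_tilde n eta"

lemmas ME' = ME[OF eta_sym eta_inv EM]
lemmas Msym' = Msym[OF eta_sym eta_inv EM]
lemmas Esym' = Esym[OF eta_sym eta_inv EM]
lemmas W_split' = W_split[OF eta_sym eta_inv EM]

definition W where "W a b c d = (\<Sum>l\<in>J. \<Sum>m\<in>J. T a b l * M l m * T c d m)"

lemma contractL:
  assumes a: "a \<in> J" and X: "\<forall>l\<in>J. X l = E a l"
  shows "(\<Sum>l\<in>J. \<Sum>m\<in>J. X l * M l m * Y m) = Y a"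
proof -
  have "(\<Sum>l\<in>J. \<Sum>m\<in>J. X l * M l m * Y m) = (\<Sum>l\<in>J. \<Sum>m\<in>J. E a l * M l m * Y m)"
    using X by (intro sum.cong refl) auto
  also have "\<dots> = (\<Sum>m\<in>J. \<Sum>l\<in>J. E a l * M l m * Y m)" by (rule sum.swap)
  also have "\<dots> = (\<Sum>m\<in>J. (\<Sum>l\<in>J. E a l * M l m) * Y m)" by (simp only: sum_distrib_right)
  also have "\<dots> = (\<Sum>m\<in>J. (if a = m then 1 else 0) * Y m)"
  proof (intro sum.cong refl)
    fix m assume m: "m \<in> J"
    show "(\<Sum>l\<in>J. E a l * M l m) * Y m = (if a = m then 1 else 0) * Y m"
      using EM[rule_format, OF a m] by simp
  qed
  also have "\<dots> = Y a" using a by (simp add: ifd2 sum.delta)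
  finally show ?thesis .
qed

lemma contractR:
  assumes d: "d \<in> J" and Y: "\<forall>m\<in>J. Y m = E d m"
  shows "(\<Sum>l\<in>J. \<Sum>m\<in>J. X l * M l m * Y m) = X d"
proof -
  have "(\<Sum>l\<in>J. \<Sum>m\<in>J. X l * M l m * Y m) = (\<Sum>l\<in>J. X l * (\<Sum>m\<in>J. M l m * E m d))"
  proof -
    have "(\<Sum>l\<in>J. \<Sum>m\<in>J. X l * M l m * Y m) = (\<Sum>l\<in>J. \<Sum>m\<in>J. X l * (M l m * E m d))"
    proof (intro sum.cong refl)
      fix l m assume m: "m \<in> J"
      have "E m d = E d m" using Esym'[where x=m and y=d] m d by simp
      then show "X l * M l m * Y m = X l * (M l m * E m d)" using Y m by simp
    qed
    then show ?thesis by (simp only: sum_distrib_left)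
  qed
  also have "\<dots> = (\<Sum>l\<in>J. X l * (if l = d then 1 else 0))"
  proof (intro sum.cong refl)
    fix l assume l: "l \<in> J"
    show "X l * (\<Sum>m\<in>J. M l m * E m d) = X l * (if l = d then 1 else 0)"
      using ME'[rule_format, OF l d] by simp
  qed
  also have "\<dots> = X d" using d by (simp add: ifd1 sum.delta')
  finally show ?thesis .
qed

lemma Tp:
  assumes "a \<in> J" "b \<in> J" "c \<in> J"
  shows "T b a c = T a b c" "T a c b = T a b c" "T b c a = T a b c" "T c a b = T a b c" "T c b a = T a b c"
proof -
  have 1: "T b a c = T a b c" using Ts1 assms by blast
  have 2: "T a c b = T a b c" using Ts2 assms by blast
  have 3: "T b c a = T b a c" using Ts2 assms by blast
  have 4: "T c a b = T a c b" using Ts1 assms by blast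
  have 5: "T c b a = T b c a" using Ts1 assms by blast
  show "T b a c = T a b c" "T a c b = T a b c" "T b c a = T a b c" "T c a b = T a b c" "T c b a = T a b c"
    using 1 2 3 4 5 by simp_all
qed

lemma TE: "a \<in> J \<Longrightarrow> l \<in> J \<Longrightarrow> T a 0 l = E a l"
proof -
  assume a: "a \<in> J" and l: "l \<in> J"
  have "T a 0 l = T 0 a l" using Ts1 a l by simp
  then show ?thesis using T0 a l by simp
qed

lemma TNz: "a \<in> J \<Longrightarrow> b \<in> J \<Longrightarrow> a \<noteq> 0 \<Longrightarrow> T a b (n+1) = 0" "a \<in> J \<Longrightarrow> b \<in> J \<Longrightarrow> a \<noteq> 0 \<Longrightarrow> T a (n+1) b = 0"
proof -
  assume a: "a \<in> J" and b: "b \<in> J" and a0: "a \<noteq> 0"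
  have N: "n+1 \<in> J" by simp
  have "T a (n+1) b = T (n+1) a b" using Ts1 a b N by blast
  then show "T a (n+1) b = 0" using TN a b a0 by simp
  moreover have "T a b (n+1) = T a (n+1) b" using Ts2 a b N by blast
  ultimately show "T a b (n+1) = 0" by simp
qed

lemma WDVV:
  assumes a: "a \<in> J" and b: "b \<in> J" and c: "c \<in> J" and d: "d \<in> J"
  shows "W a b c d = W c b a d"
proof -
  consider "b = 0" | "d = 0" | "a = 0" | "c = 0" | "a \<noteq> 0" "b \<noteq> 0" "c \<noteq> 0" "d \<noteq> 0" by blast
  then show ?thesis
  proof cases
    case 1
    have "W a b c d = T c d a" unfolding W_def 1 using a by (intro contractL) (auto simp: TE)
    moreover have "W c b a d = T a d c" unfolding W_def 1 using c by (intro contractL) (auto simp: TE)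
    moreover have "T c d a = T a d c" using Tp[OF a d c] by simp
    ultimately show ?thesis by simp
  next
    case 2
    have "W a b c d = T a b c" unfolding W_def 2 using c by (intro contractR) (auto simp: TE)
    moreover have "W c b a d = T c b a" unfolding W_def 2 using a by (intro contractR) (auto simp: TE)
    moreover have "T a b c = T c b a" using Tp[OF a b c] by simp
    ultimately show ?thesis by simp
  next
    case 3
    have "W a b c d = T c d b" unfolding W_def 3 using b T0 by (intro contractL) auto
    moreover have "W c b a d = T c b d" unfolding W_def 3 using d T0 by (intro contractR) auto
    moreover have "T c d b = T c b d" using Tp[OF c b d] by simp
    ultimately show ?thesis by simp
  next
    case 4
    have "W a b c d = T a b d" unfolding W_def 4 using d T0 by (intro contractR) auto
    moreover have "W c b a d = T a d b" unfolding W_def 4 using b T0 by (intro contractL) auto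
    moreover have "T a b d = T a d b" using Tp[OF a b d] by simp
    ultimately show ?thesis by simp
  next
    case 5
    show ?thesis
    proof (cases "a = n+1 \<or> b = n+1 \<or> c = n+1 \<or> d = n+1")
      case True
      have zX: "\<forall>l\<in>J. T x y l = 0" if "x \<in> J" "y \<in> J" "x \<noteq> 0" "y \<noteq> 0" "x = n+1 \<or> y = n+1" for x y
      proof
        fix l assume l: "l \<in> J"
        have N: "n+1 \<in> J" by simp
        show "T x y l = 0"
        proof (cases "x = n+1")
          case True then show ?thesis using TN that l by auto
        next
          case False
          then have "y = n+1" using that by blast
          then show ?thesis using Tp(1)[OF that(1) N l] TN that l by auto
        qed
      qed
      have Z1: "\<forall>l\<in>J. T a b l = 0" if "a = n+1 \<or> b = n+1" using zX[OF a b] 5 that by simp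
      have Z2: "\<forall>l\<in>J. T c d l = 0" if "c = n+1 \<or> d = n+1" using zX[OF c d] 5 that by simp
      have Z3: "\<forall>l\<in>J. T c b l = 0" if "c = n+1 \<or> b = n+1" using zX[OF c b] 5 that by simp
      have Z4: "\<forall>l\<in>J. T a d l = 0" if "a = n+1 \<or> d = n+1" using zX[OF a d] 5 that by simp
      have "(\<forall>l\<in>J. T a b l = 0) \<or> (\<forall>m\<in>J. T c d m = 0)" using True Z1 Z2 by blast
      then have "W a b c d = 0" unfolding W_def by (rule sum_zero_ext)
      moreover have "(\<forall>l\<in>J. T c b l = 0) \<or> (\<forall>m\<in>J. T a d m = 0)" using True Z3 Z4 by blast
      then have "W c b a d = 0" unfolding W_def by (rule sum_zero_ext)
      ultimately show ?thesis by simp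
    next
      case False
      then have I: "a \<in> {1..n}" "b \<in> {1..n}" "c \<in> {1..n}" "d \<in> {1..n}" using a b c d 5 by auto
      have "W a b c d = T a b 0 * T c d (n+1) + T a b (n+1) * T c d 0 + (\<Sum>l\<in>{1..n}. \<Sum>m\<in>{1..n}. T a b l * g l m * T c d m)"
        unfolding W_def by (rule W_split')
      moreover have "T c d (n+1) = 0" "T a b (n+1) = 0" using TNz(1) a b c d 5 by auto
      ultimately have W1: "W a b c d = (\<Sum>l\<in>{1..n}. \<Sum>m\<in>{1..n}. T a b l * g l m * T c d m)" by simp
      have "W c b a d = T c b 0 * T a d (n+1) + T c b (n+1) * T a d 0 + (\<Sum>l\<in>{1..n}. \<Sum>m\<in>{1..n}. T c b l * g l m * T a d m)"
        unfolding W_def by (rule W_split')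
      moreover have "T a d (n+1) = 0" "T c b (n+1) = 0" using TNz(1) a b c d 5 by auto
      ultimately have W2: "W c b a d = (\<Sum>l\<in>{1..n}. \<Sum>m\<in>{1..n}. T c b l * g l m * T a d m)" by simp
      show ?thesis unfolding W1 W2 using FW I by blast
    qed
  qed
qed


lemma W_ab: "a \<in> J \<Longrightarrow> b \<in> J \<Longrightarrow> W a b c d = W b a c d"
  unfolding W_def by (intro sum.cong refl) (simp add: Tp(1))

lemma W_pair: "W a b c d = W c d a b"
proof -
  have "W c d a b = (\<Sum>m\<in>J. \<Sum>l\<in>J. T c d l * M l m * T a b m)"
    unfolding W_def by (rule sum.swap)
  also have "\<dots> = W a b c d" unfolding W_def
  proof (intro sum.cong refl)
    fix x y assume x: "x \<in> J" and y: "y \<in> J"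
    show "T c d y * M y x * T a b x = T a b x * M x y * T c d y"
      using Msym'[OF x y] by simp
  qed
  finally show ?thesis by simp
qed

lemma W_cyc:
  assumes i: "i \<in> J" and j: "j \<in> J" and l: "l \<in> J" and q: "q \<in> J"
  shows "W i j l q = W j l q i"
proof -
  have "W j l q i = W q l j i" by (rule WDVV[OF j l q i])
  also have "\<dots> = W l q j i" by (rule W_ab[OF q l])
  also have "\<dots> = W j i l q" by (rule W_pair)
  also have "\<dots> = W i j l q" by (rule W_ab[OF j i])
  finally show ?thesis by simp
qed

lemma assoc_alg:
  assumes i: "i \<in> J" and j: "j \<in> J" and l: "l \<in> J" and m: "m \<in> J"
  shows "(\<Sum>k\<in>J. (\<Sum>p\<in>J. M k p * T p i j) * (\<Sum>q\<in>J. M m q * T q k l))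
       = (\<Sum>k\<in>J. (\<Sum>p\<in>J. M k p * T p j l) * (\<Sum>q\<in>J. M m q * T q i k))"
proof -
  have "(\<Sum>k\<in>J. (\<Sum>p\<in>J. M k p * T p i j) * (\<Sum>q\<in>J. M m q * T q k l))
      = (\<Sum>q\<in>J. \<Sum>p\<in>J. \<Sum>k\<in>J. M k p * T p i j * (M m q * T q k l))"
    by (rule prod_sums) simp
  also have "\<dots> = (\<Sum>q\<in>J. \<Sum>p\<in>J. \<Sum>k\<in>J. M m q * (T i j p * M p k * T l q k))"
  proof (intro sum.cong refl)
    fix q p k assume q: "q \<in> J" and p: "p \<in> J" and k: "k \<in> J"
    show "M k p * T p i j * (M m q * T q k l) = M m q * (T i j p * M p k * T l q k)"
      using Tp(4)[OF i j p] Tp(3)[OF l q k] Msym'[OF k p] by simp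
  qed
  also have "\<dots> = (\<Sum>q\<in>J. M m q * W i j l q)"
    unfolding W_def by (simp only: sum_distrib_left)
  also have "\<dots> = (\<Sum>q\<in>J. M m q * W j l q i)"
    using W_cyc[OF i j l] by (intro sum.cong refl) simp
  also have "\<dots> = (\<Sum>q\<in>J. \<Sum>p\<in>J. \<Sum>k\<in>J. M m q * (T j l p * M p k * T q i k))"
    unfolding W_def by (simp only: sum_distrib_left)
  also have "\<dots> = (\<Sum>q\<in>J. \<Sum>p\<in>J. \<Sum>k\<in>J. M k p * T p j l * (M m q * T q i k))"
  proof (intro sum.cong refl)
    fix q p k assume q: "q \<in> J" and p: "p \<in> J" and k: "k \<in> J"
    show "M m q * (T j l p * M p k * T q i k) = M k p * T p j l * (M m q * T q i k)"
      using Tp(4)[OF j l p] Msym'[OF k p] by simp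
  qed
  also have "\<dots> = (\<Sum>k\<in>J. (\<Sum>p\<in>J. M k p * T p j l) * (\<Sum>q\<in>J. M m q * T q i k))"
    by (rule prod_sums[symmetric]) simp
  finally show ?thesis .
qed

lemma unity_alg:
  assumes m: "m \<in> J" and k: "k \<in> J"
  shows "(\<Sum>l\<in>J. M m l * T l 0 k) = (if m = k then 1 else 0)"
proof -
  have "(\<Sum>l\<in>J. M m l * T l 0 k) = (\<Sum>l\<in>J. M m l * E l k)"
    using TE k by (intro sum.cong refl) simp
  then show ?thesis using ME'[rule_format, OF m k] by simp
qed

lemma nil_alg:
  shows "(\<Sum>l\<in>J. M k l * T l (n+1) (n+1)) = 0"
proof (intro sum.neutral ballI)
  fix l assume l: "l \<in> J"
  have N: "n+1 \<in> J" by simp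
  have "T l (n+1) (n+1) = T (n+1) (n+1) l" using Tp(4)[OF N N l] .
  then show "M k l * T l (n+1) (n+1) = 0" using TN l by simp
qed

lemma WDVV_raw:
  assumes "a \<in> J" "b \<in> J" "c \<in> J" "d \<in> J"
  shows "(\<Sum>l\<in>J. \<Sum>m\<in>J. T a b l * M l m * T c d m) = (\<Sum>l\<in>J. \<Sum>m\<in>J. T c b l * M l m * T a d m)"
  using WDVV[OF assms] unfolding W_def .

end


lemma Q3_sym:
  assumes sym: "\<forall>a\<in>{1..n}. \<forall>b\<in>{1..n}. eta a b = eta b a"
  shows "Q3 n eta a b c = Q3 n eta b a c" "Q3 n eta a b c = Q3 n eta a c b"
  using sym unfolding Q3_def by auto

lemma Q3_0:
  assumes sym: "\<forall>a\<in>{1..n}. \<forall>b\<in>{1..n}. eta a b = eta b a"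
    and "x \<in> {0..n+1}" "y \<in> {0..n+1}"
  shows "Q3 n eta 0 x y = eta_tilde n eta x y"
  using assms unfolding Q3_def eta_tilde_def by auto

lemma Q3_N:
  assumes "x \<in> {0..n+1}" "y \<in> {0..n+1}"
  shows "Q3 n eta (n+1) x y = (if x = 0 \<and> y = 0 then 1 else 0)"
  using assms unfolding Q3_def by auto

lemma Q3_I:
  assumes "a \<in> {1..n}" "b \<in> {1..n}" "c \<in> {1..n}"
  shows "Q3 n eta a b c = 0"
  using assms unfolding Q3_def by auto

theorem lemma3:
  fixes n :: nat and eta eta_inv :: "nat \<Rightarrow> nat \<Rightarrow> real"
    and F :: "(nat \<Rightarrow> real) \<Rightarrow> real"
  assumes eta_sym: "\<forall>a\<in>{1..n}. \<forall>b\<in>{1..n}. eta a b = eta b a"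
    and eta_inv: "\<forall>a\<in>{1..n}. \<forall>b\<in>{1..n}.
                    (\<Sum>l\<in>{1..n}. eta a l * eta_inv l b) = (if a = b then 1 else 0)"
    and F_vars: "depends_only {1..n} F"
    and F_smooth: "coord_Ck 3 {1..n} F"
    and F_assoc: "assoc_eqs {1..n} eta_inv F"
  shows "(\<forall>M. (\<forall>k\<in>{0..n+1}. \<forall>m\<in>{0..n+1}.
                (\<Sum>l\<in>{0..n+1}. eta_tilde n eta k l * M l m) = (if k = m then 1 else 0)) \<longrightarrow>
           assoc_eqs {0..n+1} M (Ftilde n eta F)
         \<and> (\<forall>t. \<forall>i\<in>{0..n+1}. \<forall>j\<in>{0..n+1}. \<forall>l\<in>{0..n+1}. \<forall>m\<in>{0..n+1}.
              (\<Sum>k\<in>{0..n+1}. struct_const {0..n+1} M (Ftilde n eta F) t k i j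
                                * struct_const {0..n+1} M (Ftilde n eta F) t m k l)
            = (\<Sum>k\<in>{0..n+1}. struct_const {0..n+1} M (Ftilde n eta F) t k j l
                                * struct_const {0..n+1} M (Ftilde n eta F) t m i k))
         \<and> (\<forall>t. \<forall>k\<in>{0..n+1}. \<forall>m\<in>{0..n+1}.
              struct_const {0..n+1} M (Ftilde n eta F) t m 0 k = (if m = k then 1 else 0))
         \<and> (\<forall>t. \<forall>k\<in>{0..n+1}. struct_const {0..n+1} M (Ftilde n eta F) t k (n+1) (n+1) = 0))
    \<and> (\<forall>d dF c. quasihom {1..n} d dF F \<and>
           (\<forall>a\<in>{1..n}. \<forall>b\<in>{1..n}. eta a b \<noteq> 0 \<longrightarrow> d a + d b = c) \<longrightarrow>
           quasihom {0..n+1} (d(0 := dF - c, n+1 := 2*c - dF)) dF (Ftilde n eta F))"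
proof -
  let ?J = "{0..n+1}" and ?I = "{1..n}" and ?G = "Ftilde n eta F"
  have FT: "\<And>a b c t. iter_pd [a,b,c] ?G t = Q3 n eta a b c + iter_pd [a,b,c] F t"
    by (rule T_formula[OF eta_sym F_vars F_smooth])
  have Fz: "\<And>a b c t. \<not> set [a,b,c] \<subseteq> ?I \<Longrightarrow> iter_pd [a,b,c] F t = 0"
    using iter_out[OF F_vars] by metis
  have part1: "\<forall>M. (\<forall>k\<in>{0..n+1}. \<forall>m\<in>{0..n+1}.
                (\<Sum>l\<in>{0..n+1}. eta_tilde n eta k l * M l m) = (if k = m then 1 else 0)) \<longrightarrow>
           assoc_eqs {0..n+1} M (Ftilde n eta F)
         \<and> (\<forall>t. \<forall>i\<in>{0..n+1}. \<forall>j\<in>{0..n+1}. \<forall>l\<in>{0..n+1}. \<forall>m\<in>{0..n+1}.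
              (\<Sum>k\<in>{0..n+1}. struct_const {0..n+1} M (Ftilde n eta F) t k i j
                                * struct_const {0..n+1} M (Ftilde n eta F) t m k l)
            = (\<Sum>k\<in>{0..n+1}. struct_const {0..n+1} M (Ftilde n eta F) t k j l
                                * struct_const {0..n+1} M (Ftilde n eta F) t m i k))
         \<and> (\<forall>t. \<forall>k\<in>{0..n+1}. \<forall>m\<in>{0..n+1}.
              struct_const {0..n+1} M (Ftilde n eta F) t m 0 k = (if m = k then 1 else 0))
         \<and> (\<forall>t. \<forall>k\<in>{0..n+1}. struct_const {0..n+1} M (Ftilde n eta F) t k (n+1) (n+1) = 0)"
  proof (intro allI impI)
    fix M :: "nat \<Rightarrow> nat \<Rightarrow> real"
    assume EM: "\<forall>k\<in>{0..n+1}. \<forall>m\<in>{0..n+1}.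
                (\<Sum>l\<in>{0..n+1}. eta_tilde n eta k l * M l m) = (if k = m then 1 else 0)"
    define T where "T t a b c = iter_pd [a,b,c] ?G t" for t a b c
    have Ts1: "\<forall>a\<in>?J. \<forall>b\<in>?J. \<forall>c\<in>?J. T t a b c = T t b a c" for t
      unfolding T_def FT using Q3_sym(1)[OF eta_sym] F_sym(1)[OF F_vars F_smooth] by simp
    have Ts2: "\<forall>a\<in>?J. \<forall>b\<in>?J. \<forall>c\<in>?J. T t a b c = T t a c b" for t
      unfolding T_def FT using Q3_sym(2)[OF eta_sym] F_sym(2)[OF F_vars F_smooth] by simp
    have T0: "\<forall>x\<in>?J. \<forall>y\<in>?J. T t 0 x y = eta_tilde n eta x y" for t
      unfolding T_def FT using Q3_0[OF eta_sym] Fz by simp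
    have TN: "\<forall>x\<in>?J. \<forall>y\<in>?J. T t (n+1) x y = (if x = 0 \<and> y = 0 then 1 else 0)" for t
    proof (intro ballI)
      fix x y assume x: "x \<in> ?J" and y: "y \<in> ?J"
      have "iter_pd [n+1,x,y] F t = 0" by (rule Fz) simp
      then show "T t (n+1) x y = (if x = 0 \<and> y = 0 then 1 else 0)"
        unfolding T_def FT using Q3_N[OF x y] by simp
    qed
    have TI: "T t a b c = iter_pd [a,b,c] F t" if "a \<in> ?I" "b \<in> ?I" "c \<in> ?I" for t a b c
      unfolding T_def FT using Q3_I[OF that] by simp
    have FW: "\<forall>a\<in>?I. \<forall>b\<in>?I. \<forall>c\<in>?I. \<forall>d\<in>?I.
        (\<Sum>l\<in>?I. \<Sum>m\<in>?I. T t a b l * eta_inv l m * T t c d m)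
      = (\<Sum>l\<in>?I. \<Sum>m\<in>?I. T t c b l * eta_inv l m * T t a d m)" for t
    proof (intro ballI)
      fix a b c d assume abcd: "a \<in> ?I" "b \<in> ?I" "c \<in> ?I" "d \<in> ?I"
      have "(\<Sum>l\<in>?I. \<Sum>m\<in>?I. T t a b l * eta_inv l m * T t c d m)
          = (\<Sum>l\<in>?I. \<Sum>m\<in>?I. iter_pd [a,b,l] F t * eta_inv l m * iter_pd [c,d,m] F t)"
        using abcd by (intro sum.cong refl) (simp add: TI)
      also have "\<dots> = (\<Sum>l\<in>?I. \<Sum>m\<in>?I. iter_pd [c,b,l] F t * eta_inv l m * iter_pd [a,d,m] F t)"
        using F_assoc abcd unfolding assoc_eqs_def by blast
      also have "\<dots> = (\<Sum>l\<in>?I. \<Sum>m\<in>?I. T t c b l * eta_inv l m * T t a d m)"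
        using abcd by (intro sum.cong refl) (simp add: TI)
      finally show "(\<Sum>l\<in>?I. \<Sum>m\<in>?I. T t a b l * eta_inv l m * T t c d m)
      = (\<Sum>l\<in>?I. \<Sum>m\<in>?I. T t c b l * eta_inv l m * T t a d m)" .
    qed
    show "assoc_eqs {0..n+1} M (Ftilde n eta F)
         \<and> (\<forall>t. \<forall>i\<in>{0..n+1}. \<forall>j\<in>{0..n+1}. \<forall>l\<in>{0..n+1}. \<forall>m\<in>{0..n+1}.
              (\<Sum>k\<in>{0..n+1}. struct_const {0..n+1} M (Ftilde n eta F) t k i j
                                * struct_const {0..n+1} M (Ftilde n eta F) t m k l)
            = (\<Sum>k\<in>{0..n+1}. struct_const {0..n+1} M (Ftilde n eta F) t k j l
                                * struct_const {0..n+1} M (Ftilde n eta F) t m i k))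
         \<and> (\<forall>t. \<forall>k\<in>{0..n+1}. \<forall>m\<in>{0..n+1}.
              struct_const {0..n+1} M (Ftilde n eta F) t m 0 k = (if m = k then 1 else 0))
         \<and> (\<forall>t. \<forall>k\<in>{0..n+1}. struct_const {0..n+1} M (Ftilde n eta F) t k (n+1) (n+1) = 0)"
    proof (intro conjI allI ballI)
      show "assoc_eqs {0..n+1} M (Ftilde n eta F)"
        unfolding assoc_eqs_def
      proof (intro allI ballI)
        fix t a b c d assume "a \<in> ?J" "b \<in> ?J" "c \<in> ?J" "d \<in> ?J"
        from WDVV_raw[OF eta_sym eta_inv EM Ts1[of t] Ts2[of t] T0[of t] TN[of t] FW[of t] this] show
          "(\<Sum>l\<in>?J. \<Sum>m\<in>?J. iter_pd [a, b, l] ?G t * M l m * iter_pd [c, d, m] ?G t)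
         = (\<Sum>l\<in>?J. \<Sum>m\<in>?J. iter_pd [c, b, l] ?G t * M l m * iter_pd [a, d, m] ?G t)"
          unfolding T_def .
      qed
    next
      fix t i j l m assume "i \<in> ?J" "j \<in> ?J" "l \<in> ?J" "m \<in> ?J"
      from assoc_alg[OF eta_sym eta_inv EM Ts1[of t] Ts2[of t] T0[of t] TN[of t] FW[of t] this] show
        "(\<Sum>k\<in>?J. struct_const ?J M ?G t k i j * struct_const ?J M ?G t m k l)
       = (\<Sum>k\<in>?J. struct_const ?J M ?G t k j l * struct_const ?J M ?G t m i k)"
        unfolding struct_const_def T_def .
    next
      fix t k m assume "k \<in> ?J" "m \<in> ?J"
      from unity_alg[OF eta_sym eta_inv EM Ts1[of t] Ts2[of t] T0[of t] TN[of t] FW[of t] this(2) this(1)] show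
        "struct_const ?J M ?G t m 0 k = (if m = k then 1 else 0)"
        unfolding struct_const_def T_def .
    next
      fix t k assume "k \<in> ?J"
      from nil_alg[OF eta_sym eta_inv EM Ts1[of t] Ts2[of t] T0[of t] TN[of t] FW[of t], of k] show "struct_const ?J M ?G t k (n+1) (n+1) = 0"
        unfolding struct_const_def T_def .
    qed
  qed
  have part2: "\<forall>d dF c. quasihom {1..n} d dF F \<and>
           (\<forall>a\<in>{1..n}. \<forall>b\<in>{1..n}. eta a b \<noteq> 0 \<longrightarrow> d a + d b = c) \<longrightarrow>
           quasihom {0..n+1} (d(0 := dF - c, n+1 := 2*c - dF)) dF (Ftilde n eta F)"
  proof (intro allI impI)
    fix d :: "nat \<Rightarrow> real" and dF c :: real
    assume H: "quasihom {1..n} d dF F \<and> (\<forall>a\<in>{1..n}. \<forall>b\<in>{1..n}. eta a b \<noteq> 0 \<longrightarrow> d a + d b = c)"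
    then have qh: "quasihom {1..n} d dF F" and dc: "\<forall>a\<in>{1..n}. \<forall>b\<in>{1..n}. eta a b \<noteq> 0 \<longrightarrow> d a + d b = c"
      by auto
    define d' where "d' = d(0 := dF - c, n+1 := 2*c - dF)"
    show "quasihom {0..n+1} (d(0 := dF - c, n+1 := 2*c - dF)) dF (Ftilde n eta F)"
      unfolding quasihom_def d'_def[symmetric]
    proof (intro allI impI)
      fix lam :: real and t :: "nat \<Rightarrow> real" assume lam: "lam > 0"
      define s where "s = (\<lambda>i. if i \<in> {0..n+1} then lam powr d' i * t i else t i)"
      have s0: "s 0 = lam powr (dF - c) * t 0" unfolding s_def d'_def by simp
      have sN: "s (n+1) = lam powr (2*c - dF) * t (n+1)" unfolding s_def d'_def by simp
      have sa: "s a = lam powr d a * t a" if "a \<in> {1..n}" for a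
        using that unfolding s_def d'_def by auto
      have "F s = F (\<lambda>i. if i \<in> {1..n} then lam powr d i * t i else t i)"
        using F_vars sa unfolding depends_only_def by auto
      also have "\<dots> = lam powr dF * F t" using qh lam unfolding quasihom_def by blast
      finally have Fs: "F s = lam powr dF * F t" .
      have S: "(\<Sum>a\<in>{1..n}. \<Sum>b\<in>{1..n}. eta a b * s a * s b)
             = lam powr c * (\<Sum>a\<in>{1..n}. \<Sum>b\<in>{1..n}. eta a b * t a * t b)"
        unfolding sum_distrib_left
      proof (intro sum.cong refl)
        fix a b assume a: "a \<in> {1..n}" and b: "b \<in> {1..n}"
        show "eta a b * s a * s b = lam powr c * (eta a b * t a * t b)"
        proof (cases "eta a b = 0")
          case True then show ?thesis by simp
        next
          case False
          then have "d a + d b = c" using dc a b by blast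
          then have "lam powr d a * lam powr d b = lam powr c" by (simp add: powr_add[symmetric])
          then show ?thesis unfolding sa[OF a] sa[OF b]
            by (metis (no_types, lifting) mult.assoc mult.left_commute)
        qed
      qed
      have P1: "lam powr c * lam powr (dF - c) = lam powr dF" by (simp add: powr_add[symmetric])
      have P2: "(lam powr (dF - c))^2 * lam powr (2*c - dF) = lam powr dF"
        by (simp add: power2_eq_square powr_add[symmetric])
      have "Ftilde n eta F s = 1/2 * ((lam powr c * (\<Sum>a\<in>{1..n}. \<Sum>b\<in>{1..n}. eta a b * t a * t b))
             * (lam powr (dF - c) * t 0) + (lam powr (dF - c) * t 0)^2 * (lam powr (2*c - dF) * t (n+1)))
             + lam powr dF * F t"
        unfolding Ftilde_def S s0 sN Fs ..
      also have "\<dots> = 1/2 * ((lam powr c * lam powr (dF - c)) * ((\<Sum>a\<in>{1..n}. \<Sum>b\<in>{1..n}. eta a b * t a * t b) * t 0)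
             + ((lam powr (dF - c))^2 * lam powr (2*c - dF)) * ((t 0)^2 * t (n+1))) + lam powr dF * F t"
        by (simp add: power_mult_distrib algebra_simps)
      also have "\<dots> = lam powr dF * Ftilde n eta F t"
        unfolding P1 P2 Ftilde_def by (simp add: algebra_simps)
      finally show "Ftilde n eta F s = lam powr dF * Ftilde n eta F t" .
    qed
  qed
  from part1 part2 show ?thesis by blast
qed


end
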